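(* Let $G$ be a finite group with neutral element $e$, and let $A$ be a finitely-generated associative algebra over a commutative ring $R$ with unit, graded by $G$, i.e. $A=\bigoplus_{g\in G}A_g$ as $R$-modules with $A_gA_{g'}\subseteq A_{gg'}$ for all $g,g'\in G$. If the neutral component $A_e$ (which is a subalgebra of $A$) has a Shirshov base of height $h$, then $A$ has a Shirshov base of height strictly less than $(h+1)|G|$.
   Context: All algebras are associative (not necessarily unital) algebras over a commutative ring $R$ with unit. A finite subset $S$ of an algebra $B$ is called a Shirshov base of $B$ of height $h$ if $B$ is linearly spanned (over $R$) by the elements of the form $a_1^{k_1}a_2^{k_2}\cdots a_n^{k_n}$ with $n\le h$, $k_1,\dots,k_n$ positive integers, and $a_1,\dots,a_n\in S$. *)

theory Defs
  imports Main "HOL.Modules"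
begin

text \<open>Product of a nonempty list in a (possibly non-unital) associative ring;
  the value at the empty list is irrelevant (never used).\<close>
fun lprod :: "'a::ring list \<Rightarrow> 'a" where
  "lprod [] = 0"
| "lprod [x] = x"
| "lprod (x # y # xs) = x * lprod (y # xs)"

text \<open>Positive powers a^k (k \<ge> 1) without needing a unit.\<close>
definition npow :: "'a::ring \<Rightarrow> nat \<Rightarrow> 'a" where
  "npow a k = lprod (replicate k a)"

definition algebra_over :: "('r::comm_ring_1 \<Rightarrow> 'a::ring \<Rightarrow> 'a) \<Rightarrow> bool" where
  "algebra_over sc \<longleftrightarrow> module sc \<and>
     (\<forall>r x y. sc r (x * y) = sc r x * y \<and> sc r (x * y) = x * sc r y)"

definition fin_gen_algebra :: "('r::comm_ring_1 \<Rightarrow> 'a::ring \<Rightarrow> 'a) \<Rightarrow> bool" where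
  "fin_gen_algebra sc \<longleftrightarrow>
     (\<exists>X. finite X \<and> module.span sc {lprod xs | xs. xs \<noteq> [] \<and> set xs \<subseteq> X} = UNIV)"

text \<open>G-grading: A = direct sum of the R-submodules Ag g, with Ag g * Ag g' \<subseteq> Ag (g+g').
  The group G is written additively (not necessarily commutative).\<close>
definition graded_by :: "('r::comm_ring_1 \<Rightarrow> 'a::ring \<Rightarrow> 'a) \<Rightarrow> ('g::{group_add,finite} \<Rightarrow> 'a set) \<Rightarrow> bool" where
  "graded_by sc Ag \<longleftrightarrow>
     (\<forall>g. module.subspace sc (Ag g)) \<and>
     (\<forall>a. \<exists>!c. (\<forall>g. c g \<in> Ag g) \<and> a = (\<Sum>g\<in>UNIV. c g)) \<and>
     (\<forall>g g' x y. x \<in> Ag g \<longrightarrow> y \<in> Ag g' \<longrightarrow> x * y \<in> Ag (g + g'))"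

definition shirshov_words :: "'a::ring set \<Rightarrow> nat \<Rightarrow> 'a set" where
  "shirshov_words S h =
     {lprod (map (\<lambda>(a, k). npow a k) ps) | ps.
        ps \<noteq> [] \<and> length ps \<le> h \<and> (\<forall>(a, k) \<in> set ps. a \<in> S \<and> 0 < k)}"

definition shirshov_base :: "('r::comm_ring_1 \<Rightarrow> 'a::ring \<Rightarrow> 'a) \<Rightarrow> 'a set \<Rightarrow> 'a set \<Rightarrow> nat \<Rightarrow> bool" where
  "shirshov_base sc B S h \<longleftrightarrow>
     finite S \<and> S \<subseteq> B \<and> B = module.span sc (shirshov_words S h)"

end

theory Submission
  imports Defs
begin

lemma lprod_append:
  "xs \<noteq> [] \<Longrightarrow> ys \<noteq> [] \<Longrightarrow> lprod (xs @ ys) = lprod xs * lprod ys"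
proof (induction xs rule: lprod.induct)
  case 1 then show ?case by simp
next
  case (2 x) then show ?case by (cases ys) auto
next
  case (3 x y xs) then show ?case by (simp add: mult.assoc)
qed

lemma lprod_Cons: "ys \<noteq> [] \<Longrightarrow> lprod (y # ys) = y * lprod ys"
  by (cases ys) auto

lemma sw_mult:
  assumes "p \<in> shirshov_words T a" "q \<in> shirshov_words T b"
  shows "p * q \<in> shirshov_words T (a + b)"
proof -
  obtain ps where ps: "p = lprod (map (\<lambda>(a, k). npow a k) ps)" "ps \<noteq> []" "length ps \<le> a"
    "\<forall>(a, k) \<in> set ps. a \<in> T \<and> 0 < k"
    using assms(1) unfolding shirshov_words_def by blast
  obtain qs where qs: "q = lprod (map (\<lambda>(a, k). npow a k) qs)" "qs \<noteq> []" "length qs \<le> b"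
    "\<forall>(a, k) \<in> set qs. a \<in> T \<and> 0 < k"
    using assms(2) unfolding shirshov_words_def by blast
  have "p * q = lprod (map (\<lambda>(a, k). npow a k) (ps @ qs))"
    using ps qs by (simp add: lprod_append)
  then show ?thesis unfolding shirshov_words_def using ps qs
    by (intro CollectI exI[of _ "ps @ qs"]) auto
qed

lemma sw_mono: "a \<le> b \<Longrightarrow> T \<subseteq> T' \<Longrightarrow> shirshov_words T a \<subseteq> shirshov_words T' b"
  unfolding shirshov_words_def by fastforce

lemma sw_single: "y \<in> T \<Longrightarrow> y \<in> shirshov_words T 1"
  unfolding shirshov_words_def
  by (intro CollectI exI[of _ "[(y, 1)]"]) (auto simp: npow_def)

context
  fixes sc :: "'r::comm_ring_1 \<Rightarrow> 'a::ring \<Rightarrow> 'a"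
  assumes alg: "algebra_over sc"
begin

interpretation m: module sc using alg unfolding algebra_over_def by blast

lemma scl: "sc r (x * y) = sc r x * y"
  using alg unfolding algebra_over_def by blast
lemma scr: "sc r (x * y) = x * sc r y"
  using alg unfolding algebra_over_def by blast

lemma span_mult:
  assumes u: "u \<in> m.span A" and v: "v \<in> m.span B"
    and AB: "\<And>a b. a \<in> A \<Longrightarrow> b \<in> B \<Longrightarrow> a * b \<in> m.span C"
  shows "u * v \<in> m.span C"
proof -
  have 1: "a * v \<in> m.span C" if "a \<in> A" for a
    using v
  proof (induction v rule: m.span_induct_alt)
    case base then show ?case by (simp add: m.span_zero)
  next
    case (step c x y)
    have "a * (sc c x + y) = sc c (a * x) + a * y"
      by (simp add: distrib_left scr)
    then show ?case using step AB[OF that] by (simp add: m.span_add m.span_scale)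
  qed
  show ?thesis using u
  proof (induction u rule: m.span_induct_alt)
    case base then show ?case by (simp add: m.span_zero)
  next
    case (step c x y)
    have "(sc c x + y) * v = sc c (x * v) + y * v"
      by (simp add: distrib_right scl)
    then show ?case using step 1 by (simp add: m.span_add m.span_scale)
  qed
qed

lemma span_sw_mult:
  "u \<in> m.span (shirshov_words T a) \<Longrightarrow> v \<in> m.span (shirshov_words T b) \<Longrightarrow>
   u * v \<in> m.span (shirshov_words T (a + b))"
  by (rule span_mult) (auto intro: m.span_base sw_mult)

lemma span_sw_mono: "a \<le> b \<Longrightarrow> u \<in> m.span (shirshov_words T a) \<Longrightarrow>
   u \<in> m.span (shirshov_words T b)"
  using m.span_mono[OF sw_mono[of a b T T]] by auto

end

lemma lprod_hom:
  assumes mul: "\<And>g g' x y. x \<in> Ag g \<Longrightarrow> y \<in> Ag g' \<Longrightarrow> x * y \<in> Ag (g + g')"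
  shows "ys \<noteq> [] \<Longrightarrow> (\<forall>y\<in>set ys. y \<in> Ag (d y)) \<Longrightarrow> lprod ys \<in> Ag (sum_list (map d ys))"
proof (induction ys rule: lprod.induct)
  case 1 then show ?case by simp
next
  case (2 x) then show ?case by simp
next
  case (3 x y xs) then show ?case using mul by simp
qed

definition pre :: "('a \<Rightarrow> 'g::monoid_add) \<Rightarrow> 'a list \<Rightarrow> 'g set" where
  "pre d ys = {sum_list (map d (take i ys)) | i. i \<le> length ys}"

lemma pre_finite: "finite (pre d ys)"
proof -
  have "pre d ys = (\<lambda>i. sum_list (map d (take i ys))) ` {..length ys}"
    unfolding pre_def by auto
  then show ?thesis by simp
qed

lemma pre_zero: "0 \<in> pre d ys"
  unfolding pre_def by (intro CollectI exI[of _ 0]) simp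


lemma word:
  fixes sc :: "'r::comm_ring_1 \<Rightarrow> 'a::ring \<Rightarrow> 'a" and Ag :: "'g::group_add \<Rightarrow> 'a set"
  assumes alg: "algebra_over sc"
    and mul: "\<And>g g' x y. x \<in> Ag g \<Longrightarrow> y \<in> Ag g' \<Longrightarrow> x * y \<in> Ag (g + g')"
    and A0: "Ag 0 \<subseteq> module.span sc (shirshov_words T h)"
  shows "ys \<noteq> [] \<Longrightarrow> (\<forall>y\<in>set ys. y \<in> Ag (d y) \<and> y \<in> T) \<Longrightarrow>
    lprod ys \<in> module.span sc (shirshov_words T (card (pre d ys) * (h+1) - 1))"
proof (induction "length ys" arbitrary: ys rule: less_induct)
  case less
  define n where "n = length ys"
  define D where "D i = sum_list (map d (take i ys))" for i
  define J where "J = {i. i \<le> n \<and> D i = 0}"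
  have finJ: "finite J" unfolding J_def by auto
  have "0 \<in> J" unfolding J_def D_def by simp
  define j where "j = Max J"
  have jJ: "j \<in> J" using finJ \<open>0\<in>J\<close> j_def Max_in by auto
  have jmax: "i \<le> j" if "i \<le> n" "D i = 0" for i using that finJ j_def J_def Max_ge by auto
  have jn: "j \<le> n" "D j = 0" using jJ J_def by auto
  define c where "c = card (pre d ys)"
  have pre_eq: "pre d ys = D ` {..n}" unfolding pre_def D_def n_def by auto
  have c1: "c \<ge> 1" using pre_finite[of d ys] pre_zero[of d ys] c_def
    by (auto simp: Suc_le_eq card_gt_0_iff)
  have hom: "\<forall>y\<in>set ys. y \<in> Ag (d y)" using less.prems by auto
  show ?case
  proof (cases "j = n")
    case True
    then have "D n = 0" using jn by simp
    then have "sum_list (map d ys) = 0" unfolding D_def n_def by simp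
    then have "lprod ys \<in> Ag 0" using lprod_hom[of Ag ys d] mul hom less.prems by metis
    then have "lprod ys \<in> module.span sc (shirshov_words T h)" using A0 by auto
    moreover have "h \<le> c*(h+1) - 1" using c1 by (cases c) auto
    ultimately show ?thesis using span_sw_mono[OF alg] c_def by blast
  next
    case False
    then have jlt: "j < n" using jn by simp
    define q where "q = take j ys"
    define x where "x = ys ! j"
    define r where "r = drop (Suc j) ys"
    have ys_eq: "ys = q @ x # r" unfolding q_def x_def r_def using jlt n_def id_take_nth_drop by metis
    have xT: "x \<in> T" using less.prems x_def jlt n_def nth_mem by auto
    have Dn: "D n \<noteq> 0" using jmax[of n] jlt by auto
    have c2: "c \<ge> 2"
    proof -
      have "{0, D n} \<subseteq> pre d ys" using pre_eq pre_zero[of d ys] by auto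
      then have "card {0, D n} \<le> c" using card_mono pre_finite c_def by metis
      then show ?thesis using Dn by simp
    qed
    have part: "lprod (x # r) \<in> module.span sc (shirshov_words T ((c-1)*(h+1)))"
    proof (cases "r = []")
      case True
      then have "lprod (x # r) \<in> module.span sc (shirshov_words T 1)"
        using sw_single[OF xT] module.span_base[of sc] alg unfolding algebra_over_def by auto
      moreover have "1 \<le> (c-1)*(h+1)" using c2 by simp
      ultimately show ?thesis using span_sw_mono[OF alg] by blast
    next
      case False
      define cr where "cr = card (pre d r)"
      have lr: "length r < length ys" using r_def jlt n_def by auto
      have "set r \<subseteq> set ys" unfolding r_def by (rule set_drop_subset)
      then have IH: "lprod r \<in> module.span sc (shirshov_words T (cr*(h+1) - 1))"
        using less.hyps[OF lr] less.prems False cr_def by auto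
      have crc: "cr \<le> c - 1"
      proof -
        define a where "a = D (Suc j)"
        have "(\<lambda>z. a + z) ` pre d r \<subseteq> pre d ys - {0}"
        proof
          fix w assume "w \<in> (\<lambda>z. a+z) ` pre d r"
          then obtain i where i: "i \<le> length r" "w = a + sum_list (map d (take i r))"
            unfolding pre_def by auto
          have "take (Suc j + i) ys = take (Suc j) ys @ take i r" unfolding r_def by (metis take_add)
          then have "w = D (Suc j + i)" unfolding D_def a_def i by (simp add: add.assoc)
          moreover have si: "Suc j + i \<le> n" using i r_def n_def jlt by auto
          moreover have "D (Suc j + i) \<noteq> 0" using jmax[of "Suc j + i"] si by auto
          ultimately show "w \<in> pre d ys - {0}" using pre_eq by auto
        qed
        then have "card ((\<lambda>z. a+z) ` pre d r) \<le> card (pre d ys - {0})"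
          using card_mono pre_finite by (metis finite_Diff)
        moreover have "card ((\<lambda>z. a+z) ` pre d r) = cr"
          unfolding cr_def by (rule card_image) (auto intro: inj_onI)
        moreover have "card (pre d ys - {0}) = c - 1"
          using card_Diff_singleton pre_zero pre_finite c_def by metis
        ultimately show ?thesis by simp
      qed
      have cr1: "cr \<ge> 1" using pre_finite[of d r] pre_zero[of d r] cr_def
        by (auto simp: Suc_le_eq card_gt_0_iff)
      have "lprod (x # r) = x * lprod r" by (rule lprod_Cons[OF False])
      moreover have "x \<in> module.span sc (shirshov_words T 1)"
        using sw_single[OF xT] module.span_base[of sc] alg unfolding algebra_over_def by auto
      ultimately have "lprod (x#r) \<in> module.span sc (shirshov_words T (1 + (cr*(h+1)-1)))"
        using span_sw_mult[OF alg] IH by metis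
      moreover have "1 + (cr*(h+1)-1) \<le> (c-1)*(h+1)"
      proof -
        have "1 + (cr*(h+1)-1) = cr*(h+1)" using cr1 by (cases cr) auto
        also have "\<dots> \<le> (c-1)*(h+1)" using crc by (rule mult_le_mono1)
        finally show ?thesis .
      qed
      ultimately show ?thesis using span_sw_mono[OF alg] by blast
    qed
    have arith: "h + (c-1)*(h+1) = c*(h+1) - 1" using c1 by (cases c) auto
    show ?thesis
    proof (cases "q = []")
      case True
      then have "lprod ys = lprod (x # r)" using ys_eq by simp
      moreover have "(c-1)*(h+1) \<le> c*(h+1) - 1" using arith by linarith
      ultimately show ?thesis using part span_sw_mono[OF alg] c_def by metis
    next
      case False
      have "lprod ys = lprod q * lprod (x # r)" by (metis ys_eq lprod_append[OF False] list.distinct(1))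
      moreover have "lprod q \<in> Ag 0"
      proof -
        have "\<forall>y\<in>set q. y \<in> Ag (d y)" using hom ys_eq by auto
        then have "lprod q \<in> Ag (sum_list (map d q))" using lprod_hom[of Ag q d] mul False by metis
        moreover have "sum_list (map d q) = D j" unfolding q_def D_def by simp
        ultimately show ?thesis using jn by simp
      qed
      then have "lprod q \<in> module.span sc (shirshov_words T h)" using A0 by auto
      ultimately have "lprod ys \<in> module.span sc (shirshov_words T (h + (c-1)*(h+1)))"
        using span_sw_mult[OF alg] part by metis
      then show ?thesis using arith c_def by simp
    qed
  qed
qed


theorem theorem2:
  fixes sc :: "'r::comm_ring_1 \<Rightarrow> 'a::ring \<Rightarrow> 'a"
    and Ag :: "'g::{group_add,finite} \<Rightarrow> 'a set"
    and h :: nat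
  assumes "algebra_over sc"
    and "fin_gen_algebra sc"
    and "graded_by sc Ag"
    and "\<exists>S. shirshov_base sc (Ag 0) S h"
  shows "\<exists>S k. k < (h + 1) * card (UNIV :: 'g set) \<and> shirshov_base sc UNIV S k"
proof -
  note alg = assms(1)
  interpret m: module sc using alg unfolding algebra_over_def by blast
  obtain S where S: "finite S" "Ag 0 = m.span (shirshov_words S h)"
    using assms(4) unfolding shirshov_base_def by blast
  obtain X where X: "finite X" "m.span {lprod xs | xs. xs \<noteq> [] \<and> set xs \<subseteq> X} = UNIV"
    using assms(2) unfolding fin_gen_algebra_def by blast
  have dec: "\<forall>a. \<exists>!c. (\<forall>g. c g \<in> Ag g) \<and> a = (\<Sum>g\<in>UNIV. c g)"
    and mul: "\<And>g g' x y. x \<in> Ag g \<Longrightarrow> y \<in> Ag g' \<Longrightarrow> x * y \<in> Ag (g + g')"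
    using assms(3) unfolding graded_by_def by blast+
  define c where "c a = (THE c. (\<forall>g. c g \<in> Ag g) \<and> a = (\<Sum>g\<in>UNIV. c g))" for a
  have cP: "(\<forall>g. c a g \<in> Ag g) \<and> a = (\<Sum>g\<in>UNIV. c a g)" for a
    unfolding c_def by (rule theI'[OF dec[rule_format]])
  define Y where "Y = (\<lambda>(x, g). c x g) ` (X \<times> UNIV)"
  define d where "d y = (SOME g. y \<in> Ag g)" for y
  have Yd: "y \<in> Ag (d y)" if "y \<in> Y" for y
  proof -
    from that obtain x g where "y = c x g" unfolding Y_def by auto
    then have "\<exists>g. y \<in> Ag g" using cP by blast
    then show ?thesis unfolding d_def by (rule someI_ex)
  qed
  define T where "T = S \<union> Y"
  define K where "K = (h + 1) * card (UNIV :: 'g set) - 1"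
  have finT: "finite T" unfolding T_def Y_def using S X by auto
  have A0: "Ag 0 \<subseteq> m.span (shirshov_words T h)"
    unfolding S(2) T_def by (rule m.span_mono[OF sw_mono]) auto
  have words: "lprod ys \<in> m.span (shirshov_words T K)" if "ys \<noteq> []" "set ys \<subseteq> Y" for ys
  proof -
    have "lprod ys \<in> m.span (shirshov_words T (card (pre d ys) * (h+1) - 1))"
      using word[OF alg mul A0, of ys d] that Yd T_def by auto
    moreover have "card (pre d ys) \<le> card (UNIV :: 'g set)" by (rule card_mono) auto
    then have "card (pre d ys) * (h+1) - 1 \<le> K" unfolding K_def
      by (metis diff_le_mono mult.commute mult_le_mono2)
    ultimately show ?thesis using span_sw_mono[OF alg] by blast
  qed
  define P where "P = {lprod ys | ys. ys \<noteq> [] \<and> set ys \<subseteq> Y}"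
  have PK: "m.span P \<subseteq> m.span (shirshov_words T K)"
    by (rule m.span_minimal) (auto simp: P_def words)
  have XY: "x \<in> m.span Y" if "x \<in> X" for x
  proof -
    have "x = (\<Sum>g\<in>UNIV. c x g)" using cP by blast
    moreover have "(\<Sum>g\<in>UNIV. c x g) \<in> m.span Y"
      by (rule m.span_sum) (auto intro!: m.span_base simp: Y_def that)
    ultimately show ?thesis by simp
  qed
  have XP: "lprod xs \<in> m.span P" if "xs \<noteq> []" "set xs \<subseteq> X" for xs
    using that
  proof (induction xs)
    case Nil then show ?case by simp
  next
    case (Cons x xs)
    show ?case
    proof (cases "xs = []")
      case True
      then show ?thesis using XY Cons.prems m.span_mono[of Y P] unfolding P_def
        by (force intro: exI[of _ "[_]"])
    next
      case False
      have "lprod (x # xs) = x * lprod xs" by (rule lprod_Cons[OF False])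
      moreover have "x * lprod xs \<in> m.span P"
      proof (rule span_mult[OF alg])
        show "x \<in> m.span Y" using XY Cons.prems by auto
        show "lprod xs \<in> m.span P" using Cons False by auto
        fix a b assume "a \<in> Y" "b \<in> P"
        then obtain ys where "b = lprod ys" "ys \<noteq> []" "set ys \<subseteq> Y" unfolding P_def by auto
        then have "a * b = lprod (a # ys)" using lprod_Cons by metis
        then have "a * b \<in> P" unfolding P_def using \<open>ys \<noteq> []\<close> \<open>set ys \<subseteq> Y\<close> \<open>a \<in> Y\<close>
          by (intro CollectI exI[of _ "a # ys"]) auto
        then show "a * b \<in> m.span P" by (rule m.span_base)
      qed
      ultimately show ?thesis by simp
    qed
  qed
  have "UNIV \<subseteq> m.span P"
    unfolding X(2)[symmetric] by (rule m.span_minimal) (auto intro: XP)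
  then have "UNIV = m.span (shirshov_words T K)" using PK by auto
  moreover have "K < (h + 1) * card (UNIV :: 'g set)"
  proof -
    have "card (UNIV :: 'g set) \<ge> 1" by (simp add: Suc_le_eq card_gt_0_iff)
    then have "(h + 1) * card (UNIV :: 'g set) \<ge> 1" by simp
    then show ?thesis unfolding K_def by simp
  qed
  ultimately show ?thesis unfolding shirshov_base_def using finT by blast
qed


end
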